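(* Consider the multi-agent setting, the problems $\mathrm{FTOCP}^{(m)}_k(\hat N)$ and the CMC procedure described in the context, with all agents $m=1,\dots,M$ operating in closed loop under the CMC procedure. If at time $k=0$ the CMC procedure succeeds for every agent, then the CMC procedure succeeds for every agent at every time $k=1,2,3,\dots$ (recursive feasibility).
   Context: Setting. Let $\Delta t>0$, $\bar a>0$, $\bar v>0$, $\rho>0$, integers $M\ge 2$ and $N\ge1$, and $\tilde N:=\lceil \bar v/(\bar a\Delta t)\rceil$ with $\tilde N\le N-1$ ($\lceil r\rceil$ = smallest integer $\ge r$). Each agent $m=1,\dots,M$ has state $\mathbf{s}^{(m)}_k=(\mathbf{p}^{(m)}_k,\mathbf{v}^{(m)}_k)\in\mathbb{R}^3\times\mathbb{R}^3$ (position, velocity) and input $\mathbf{a}^{(m)}_k\in\mathbb{R}^3$, with exact, disturbance-free dynamics $\mathbf{s}_{k+1}=\mathbf{A}\mathbf{s}_k+\mathbf{B}\mathbf{a}_k$, where $\mathbf{A}=\begin{bmatrix}I_3&\Delta t I_3\\0&I_3\end{bmatrix}$, $\mathbf{B}=\begin{bmatrix}\tfrac{(\Delta t)^2}{2}I_3\\ \Delta t I_3\end{bmatrix}$; initial velocities satisfy $\|\mathbf{v}^{(m)}_0\|_2\le\bar v$. Each agent is a ball of radius $\rho$ centred at its position. Each agent $m$ has a position constraint set $\mathbb{S}^{(m)}\subseteq\mathbb{R}^3$ and a cost function $J^{(m)}$ of its nominal inputs and states; whenever an FTOCP below is feasible it is assumed to have an optimal solution (denoted by a star). All agents share a synchronized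 clock, measure all agents' states exactly, and do not communicate. Reference contingency plan. For a state $(\mathbf{p},\mathbf{v})$ let $n=\lceil\|\mathbf{v}\|_2/(\bar a\Delta t)\rceil$. The reference contingency trajectory starts at $(\mathbf{p},\mathbf{v})$ and applies the input $-\mathbf{v}/(n\Delta t)$ for steps $0,\dots,n-1$ and $\mathbf{0}$ afterwards (if $n=0$ the agent stays at $\mathbf{p}$). Denote by $\mathbf{r}^{(j)}_{i|k}$, $i=0,1,2,\dots$, the positions of the reference contingency trajectory computed from $\mathbf{s}^{(j)}_k$. Collision-avoidance constraint of agent $m$ w.r.t. agent $j\ne m$ at step $i$: with $d^{(j,m)}_{i|k}=\|\mathbf{r}^{(j)}_{i|k}-\mathbf{r}^{(m)}_{i|k}\|_2$, $\mathbf{g}^{(j,m)}_{i|k}=(\mathbf{r}^{(j)}_{i|k}-\mathbf{r}^{(m)}_{i|k})/d^{(j,m)}_{i|k}$ and $h^{(j,m)}_{i|k}=\mathbf{g}^{(j,m)\mathrm T}_{i|k}\mathbf{r}^{(m)}_{i|k}+\tfrac12 d^{(j,m)}_{i|k}-\rho$, a point $\mathbf{q}\in\mathbb{R}^3$ satisfies it iff $\mathbf{g}^{(j,m)\mathrm T}_{i|k}\mathbf{q}\le h^{(j,m)}_{i|k}$. (The FTOCP is well defined only when all these $d^{(j,m)}_{i|k}$ are nonzero.) $\mathrm{FTOCP}^{(m)}_k(\hat N)$, for an integer $\hat N\ge0$: minimize $J^{(m)}$ over $\mathbf{a}^{(m)}_{0|k},\dots,\mathbf{a}^{(m)}_{N-1|k}$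 subject to: nominal states $\mathbf{s}^{(m)}_{0|k}=\mathbf{s}^{(m)}_k$, $\mathbf{s}^{(m)}_{i+1|k}=\mathbf{A}\mathbf{s}^{(m)}_{i|k}+\mathbf{B}\mathbf{a}^{(m)}_{i|k}$; $\|\mathbf{a}^{(m)}_{i|k}\|_2\le\bar a$ for $i=0,\dots,N-1$; the position of $\mathbf{s}^{(m)}_{i|k}$ lies in $\mathbb{S}^{(m)}$ for $i=1,\dots,N$; contingency states $\tilde{\mathbf{s}}^{(m)}_{1|k}=\mathbf{s}^{(m)}_{1|k}$, and, writing $\mathbf{v}^{(m)}_{1|k}$ for the velocity of $\mathbf{s}^{(m)}_{1|k}$, contingency inputs $\tilde{\mathbf{a}}^{(m)}_{i|k}=-\mathbf{v}^{(m)}_{1|k}/(\hat N\Delta t)$ and $\tilde{\mathbf{s}}^{(m)}_{i+1|k}=\mathbf{A}\tilde{\mathbf{s}}^{(m)}_{i|k}+\mathbf{B}\tilde{\mathbf{a}}^{(m)}_{i|k}$ for $i=1,\dots,\hat N$, and $\tilde{\mathbf{s}}^{(m)}_{i|k}=\tilde{\mathbf{s}}^{(m)}_{\hat N+1|k}$ for $\hat N+1<i\le N$; the position of $\tilde{\mathbf{s}}^{(m)}_{i|k}$ lies in $\mathbb{S}^{(m)}$ for $i=2,\dots,\hat N+1$; and for every $j\ne m$ and every $i=1,\dots,N$ the position of $\tilde{\mathbf{s}}^{(m)}_{i|k}$ satisfies the collision-avoidance constraint of agent $m$ w.r.t. $j$ at step $i$. CMC procedure of agent $m$ at time $k$. Let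 $\tilde N^{(m)}_k=\lceil\|\mathbf{v}^{(m)}_k\|_2/(\bar a\Delta t)\rceil$. Call a solution valid if its $\mathbf{v}^{(m)\star}_{1|k}$ satisfies $\lceil\|\mathbf{v}^{(m)\star}_{1|k}\|_2/(\bar a\Delta t)\rceil=\hat N$. (a) If $\tilde N^{(m)}_k<\tilde N$, solve $\mathrm{FTOCP}^{(m)}_k(\tilde N^{(m)}_k+1)$; if it is feasible and its optimal solution is valid, apply $\mathbf{a}^{(m)\star}_{0|k}$ and stop. (b) Otherwise solve $\mathrm{FTOCP}^{(m)}_k(\tilde N^{(m)}_k)$ with the additional constraint $\|\mathbf{v}^{(m)}_{1|k}\|_2\le\bar a\tilde N^{(m)}_k\Delta t$; if it is feasible and its optimal solution is valid, apply $\mathbf{a}^{(m)\star}_{0|k}$ and stop. (c) Otherwise (this step exists only when $\tilde N^{(m)}_k\ge1$) solve $\mathrm{FTOCP}^{(m)}_k(\tilde N^{(m)}_k-1)$ with the additional constraint $\|\mathbf{v}^{(m)}_{1|k}\|_2\le\bar a(\tilde N^{(m)}_k-1)\Delta t$ and apply $\mathbf{a}^{(m)\star}_{0|k}$. The procedure succeeds at time $k$ if it applies an input, i.e. if step (a) or (b) produces a valid optimal solution or the FTOCP in step (c) is (well defined and) feasible. In closed loop, $\mathbf{s}^{(m)}_{k+1}=\mathbf{A}\mathbf{s}^{(m)}_k+\mathbf{B}\mathbf{a}^{(m)\star}_{0|k}$ for every agent. *)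

theory Defs
  imports "HOL-Analysis.Analysis"
begin

type_synonym vec = "real^3"
type_synonym state = "vec \<times> vec"   (* (position, velocity) *)

definition step :: "real \<Rightarrow> state \<Rightarrow> vec \<Rightarrow> state" where
  "step dt s a = (fst s + dt *\<^sub>R snd s + (dt^2 / 2) *\<^sub>R a, snd s + dt *\<^sub>R a)"

definition nsteps :: "real \<Rightarrow> real \<Rightarrow> vec \<Rightarrow> nat" where
  "nsteps abar dt v = nat \<lceil>norm v / (abar * dt)\<rceil>"

definition ref_input :: "real \<Rightarrow> real \<Rightarrow> state \<Rightarrow> nat \<Rightarrow> vec" where
  "ref_input abar dt s i =
     (let n = nsteps abar dt (snd s)
      in if i < n then - ((1 / (real n * dt)) *\<^sub>R snd s) else 0)"

fun ref_state :: "real \<Rightarrow> real \<Rightarrow> state \<Rightarrow> nat \<Rightarrow> state" where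
  "ref_state abar dt s 0 = s"
| "ref_state abar dt s (Suc i) = step dt (ref_state abar dt s i) (ref_input abar dt s i)"

definition ref_pos :: "real \<Rightarrow> real \<Rightarrow> state \<Rightarrow> nat \<Rightarrow> vec" where
  "ref_pos abar dt s i = fst (ref_state abar dt s i)"

text \<open>Collision-avoidance half-space of agent m (reference position rm) w.r.t. agent j
  (reference position rj): g^T q \<le> h.\<close>
definition ca_ok :: "real \<Rightarrow> vec \<Rightarrow> vec \<Rightarrow> vec \<Rightarrow> bool" where
  "ca_ok rho rj rm q =
     (let d = norm (rj - rm); g = (1 / d) *\<^sub>R (rj - rm); h = g \<bullet> rm + d / 2 - rho
      in g \<bullet> q \<le> h)"

text \<open>Nominal states s_{i|k} generated by the input list as (as ! i = a_{i|k}).\<close>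
fun nom_state :: "real \<Rightarrow> state \<Rightarrow> vec list \<Rightarrow> nat \<Rightarrow> state" where
  "nom_state dt s0 as 0 = s0"
| "nom_state dt s0 as (Suc i) = step dt (nom_state dt s0 as i) (as ! i)"

text \<open>Contingency state \<tilde>s_{i|k} for i \<ge> 1, starting at \<tilde>s_{1|k} = s1 = s_{1|k},
  with input -v1/(Nh dt) for Nh steps, then constant.\<close>
definition cont_state :: "real \<Rightarrow> nat \<Rightarrow> state \<Rightarrow> nat \<Rightarrow> state" where
  "cont_state dt Nh s1 i =
     ((\<lambda>s. step dt s (- ((1 / (real Nh * dt)) *\<^sub>R snd s1))) ^^ (min (i - 1) Nh)) s1"

text \<open>Constraints of FTOCP^(m)_k(Nh); st j = current state of agent j; vb = optional
  additional bound on the norm of v_{1|k}. Well-definedness (all d nonzero) is required.\<close>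
definition ftocp_constr ::
  "real \<Rightarrow> real \<Rightarrow> real \<Rightarrow> nat \<Rightarrow> nat \<Rightarrow> (nat \<Rightarrow> vec set) \<Rightarrow> (nat \<Rightarrow> state) \<Rightarrow> nat
   \<Rightarrow> nat \<Rightarrow> real option \<Rightarrow> vec list \<Rightarrow> bool" where
  "ftocp_constr dt abar rho M N S st m Nh vb as =
     (length as = N \<and>
      (\<forall>i<N. norm (as ! i) \<le> abar) \<and>
      (\<forall>i\<in>{1..N}. fst (nom_state dt (st m) as i) \<in> S m) \<and>
      (let s1 = nom_state dt (st m) as 1 in
        (\<forall>i\<in>{2..Nh+1}. fst (cont_state dt Nh s1 i) \<in> S m) \<and>
        (\<forall>j\<in>{1..M}. j \<noteq> m \<longrightarrow> (\<forall>i\<in>{1..N}.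
            ref_pos abar dt (st j) i \<noteq> ref_pos abar dt (st m) i \<and>
            ca_ok rho (ref_pos abar dt (st j) i) (ref_pos abar dt (st m) i)
                  (fst (cont_state dt Nh s1 i)))) \<and>
        (case vb of None \<Rightarrow> True | Some b \<Rightarrow> norm (snd s1) \<le> b)))"

definition ftocp_feasible ::
  "real \<Rightarrow> real \<Rightarrow> real \<Rightarrow> nat \<Rightarrow> nat \<Rightarrow> (nat \<Rightarrow> vec set) \<Rightarrow> (nat \<Rightarrow> state) \<Rightarrow> nat
   \<Rightarrow> nat \<Rightarrow> real option \<Rightarrow> bool" where
  "ftocp_feasible dt abar rho M N S st m Nh vb =
     (\<exists>as. ftocp_constr dt abar rho M N S st m Nh vb as)"

text \<open>J m as ss: cost of agent m for inputs a_0..a_{N-1} and nominal states s_0..s_N.\<close>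
definition ftocp_optimal ::
  "real \<Rightarrow> real \<Rightarrow> real \<Rightarrow> nat \<Rightarrow> nat \<Rightarrow> (nat \<Rightarrow> vec set)
   \<Rightarrow> (nat \<Rightarrow> vec list \<Rightarrow> state list \<Rightarrow> real) \<Rightarrow> (nat \<Rightarrow> state) \<Rightarrow> nat
   \<Rightarrow> nat \<Rightarrow> real option \<Rightarrow> vec list \<Rightarrow> bool" where
  "ftocp_optimal dt abar rho M N S J st m Nh vb as =
     (ftocp_constr dt abar rho M N S st m Nh vb as \<and>
      (\<forall>bs. ftocp_constr dt abar rho M N S st m Nh vb bs \<longrightarrow>
         J m as (map (nom_state dt (st m) as) [0..<Suc N])
           \<le> J m bs (map (nom_state dt (st m) bs) [0..<Suc N])))"

definition valid_sol :: "real \<Rightarrow> real \<Rightarrow> state \<Rightarrow> nat \<Rightarrow> vec list \<Rightarrow> bool" where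
  "valid_sol dt abar s0 Nh as = (\<lceil>norm (snd (nom_state dt s0 as 1)) / (abar * dt)\<rceil> = int Nh)"

text \<open>Stages g = 0,1,2 of the CMC procedure ((a),(b),(c)); Nt = \<tilde>N^(m)_k.\<close>
definition stage_Nh :: "nat \<Rightarrow> nat \<Rightarrow> nat" where
  "stage_Nh Nt g = (if g = 0 then Nt + 1 else if g = 1 then Nt else Nt - 1)"

definition stage_vb :: "real \<Rightarrow> real \<Rightarrow> nat \<Rightarrow> nat \<Rightarrow> real option" where
  "stage_vb abar dt Nt g =
     (if g = 0 then None else if g = 1 then Some (abar * real Nt * dt)
      else Some (abar * real (Nt - 1) * dt))"

text \<open>sol g = the optimal solution returned by the solver for stage g.\<close>
definition cmc_stage_ok ::
  "real \<Rightarrow> real \<Rightarrow> real \<Rightarrow> real \<Rightarrow> nat \<Rightarrow> nat \<Rightarrow> (nat \<Rightarrow> vec set) \<Rightarrow> (nat \<Rightarrow> state)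
   \<Rightarrow> nat \<Rightarrow> (nat \<Rightarrow> vec list) \<Rightarrow> nat \<Rightarrow> bool" where
  "cmc_stage_ok dt abar vbar rho M N S st m sol g =
     (let Nt = nsteps abar dt (snd (st m)); Ntil = nat \<lceil>vbar / (abar * dt)\<rceil> in
      if g = 0 then
        Nt < Ntil \<and> ftocp_feasible dt abar rho M N S st m (stage_Nh Nt 0) (stage_vb abar dt Nt 0)
        \<and> valid_sol dt abar (st m) (stage_Nh Nt 0) (sol 0)
      else if g = 1 then
        ftocp_feasible dt abar rho M N S st m (stage_Nh Nt 1) (stage_vb abar dt Nt 1)
        \<and> valid_sol dt abar (st m) (stage_Nh Nt 1) (sol 1)
      else
        1 \<le> Nt \<and> ftocp_feasible dt abar rho M N S st m (stage_Nh Nt 2) (stage_vb abar dt Nt 2))"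

definition cmc_succeeds ::
  "real \<Rightarrow> real \<Rightarrow> real \<Rightarrow> real \<Rightarrow> nat \<Rightarrow> nat \<Rightarrow> (nat \<Rightarrow> vec set) \<Rightarrow> (nat \<Rightarrow> state)
   \<Rightarrow> nat \<Rightarrow> (nat \<Rightarrow> vec list) \<Rightarrow> bool" where
  "cmc_succeeds dt abar vbar rho M N S st m sol =
     (\<exists>g\<le>2. cmc_stage_ok dt abar vbar rho M N S st m sol g)"

definition cmc_input ::
  "real \<Rightarrow> real \<Rightarrow> real \<Rightarrow> real \<Rightarrow> nat \<Rightarrow> nat \<Rightarrow> (nat \<Rightarrow> vec set) \<Rightarrow> (nat \<Rightarrow> state)
   \<Rightarrow> nat \<Rightarrow> (nat \<Rightarrow> vec list) \<Rightarrow> vec" where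
  "cmc_input dt abar vbar rho M N S st m sol =
     (if cmc_stage_ok dt abar vbar rho M N S st m sol 0 then sol 0 ! 0
      else if cmc_stage_ok dt abar vbar rho M N S st m sol 1 then sol 1 ! 0
      else sol 2 ! 0)"

end

theory Submission
  imports Defs
begin

definition brk :: "real \<Rightarrow> nat \<Rightarrow> vec \<Rightarrow> state \<Rightarrow> state" where
  "brk dt n v x = step dt x (- ((1 / (real n * dt)) *\<^sub>R v))"

lemma snd_step: "snd (step dt x a) = snd x + dt *\<^sub>R a"
  by (simp add: step_def)

lemma step_zero: "snd x = 0 \<Longrightarrow> step dt x 0 = x"
  by (cases x) (simp add: step_def)

lemma iter_vel:
  assumes "dt > 0" "n > 0" "j \<le> n"
  shows "snd ((brk dt n (snd x0) ^^ j) x0) = (1 - real j / real n) *\<^sub>R snd x0"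
  using assms(3)
proof (induction j)
  case 0 then show ?case by simp
next
  case (Suc j)
  then have IH: "snd ((brk dt n (snd x0) ^^ j) x0) = (1 - real j / real n) *\<^sub>R snd x0" by simp
  have "snd ((brk dt n (snd x0) ^^ Suc j) x0)
      = (1 - real j / real n) *\<^sub>R snd x0 - (dt * (1 / (real n * dt))) *\<^sub>R snd x0"
    by (simp add: brk_def snd_step IH scaleR_diff_left)
  also have "dt * (1 / (real n * dt)) = 1 / real n" using assms by simp
  also have "(1 - real j / real n) *\<^sub>R snd x0 - (1 / real n) *\<^sub>R snd x0
      = (1 - real (Suc j) / real n) *\<^sub>R snd x0"
    by (simp add: scaleR_diff_left[symmetric] add_divide_distrib diff_divide_distrib)
  finally show ?case .
qed

lemma nsteps_zero:
  assumes "dt > 0" "abar > 0" "nsteps abar dt v = 0"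
  shows "v = 0"
proof -
  have "\<lceil>norm v / (abar * dt)\<rceil> \<le> 0" using assms(3) by (simp add: nsteps_def)
  then have "norm v / (abar * dt) \<le> 0" by (simp add: ceiling_le_iff)
  moreover have "abar * dt > 0" using assms by simp
  ultimately have "norm v \<le> 0" by (simp add: divide_le_0_iff)
  then show ?thesis by simp
qed

lemma nsteps_ge:
  assumes "dt > 0" "abar > 0"
  shows "norm v \<le> abar * dt * real (nsteps abar dt v)"
proof -
  have "norm v / (abar * dt) \<le> of_int \<lceil>norm v / (abar * dt)\<rceil>" by simp
  also have "\<lceil>norm v / (abar * dt)\<rceil> = int (nsteps abar dt v)"
  proof -
    have "0 \<le> norm v / (abar * dt)" using assms by simp
    then have "0 \<le> \<lceil>norm v / (abar * dt)\<rceil>" by simp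
    then show ?thesis unfolding nsteps_def by simp
  qed
  finally have "norm v / (abar * dt) \<le> real (nsteps abar dt v)" by simp
  then show ?thesis using assms by (simp add: divide_le_eq mult.commute)
qed

lemma ref_iter:
  assumes "dt > 0" "abar > 0"
  shows "ref_state abar dt s i = (brk dt (nsteps abar dt (snd s)) (snd s) ^^ min i (nsteps abar dt (snd s))) s"
proof (induction i)
  case 0 then show ?case by simp
next
  case (Suc i)
  let ?n = "nsteps abar dt (snd s)"
  show ?case
  proof (cases "i < ?n")
    case True
    then show ?thesis using Suc
      by (simp add: ref_input_def brk_def Let_def min_def)
  next
    case False
    have z: "snd ((brk dt ?n (snd s) ^^ ?n) s) = 0"
    proof (cases "?n = 0")
      case True then show ?thesis using nsteps_zero[OF assms] by simp
    next
      case False then show ?thesis using iter_vel[OF assms(1), of ?n ?n s] by simp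
    qed
    have "ref_state abar dt s (Suc i) = step dt ((brk dt ?n (snd s) ^^ ?n) s) 0"
      using Suc False by (simp add: ref_input_def Let_def min_def)
    also have "\<dots> = (brk dt ?n (snd s) ^^ ?n) s" using z by (rule step_zero)
    finally show ?thesis using False by (simp add: min_def)
  qed
qed

lemma cont_iter: "cont_state dt Nh s1 i = (brk dt Nh (snd s1) ^^ min (i - 1) Nh) s1"
  by (simp add: cont_state_def brk_def[abs_def])


lemma nom1: "nom_state dt s0 as 1 = step dt s0 (as ! 0)"
  by (simp add: numeral_eq_Suc)

lemma stage_c_nsteps:
  assumes dt: "dt > 0" and ab: "abar > 0"
    and Nt: "Nt = nsteps abar dt v0" and Nt1: "1 \<le> Nt"
    and a: "norm a \<le> abar"
    and vb: "norm (v0 + dt *\<^sub>R a) \<le> abar * real (Nt - 1) * dt"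
  shows "nsteps abar dt (v0 + dt *\<^sub>R a) = Nt - 1"
proof -
  let ?c = "abar * dt"
  have c: "?c > 0" using dt ab by simp
  have x0: "\<lceil>norm v0 / ?c\<rceil> = int Nt"
  proof -
    have "0 \<le> norm v0 / ?c" using c by simp
    then show ?thesis using Nt unfolding nsteps_def by simp
  qed
  then have lo: "real Nt - 1 < norm v0 / ?c" by (simp add: ceiling_eq_iff)
  have "norm v0 \<le> norm (v0 + dt *\<^sub>R a) + norm (dt *\<^sub>R a)"
    by (metis add_diff_cancel_right' norm_triangle_ineq4)
  also have "norm (dt *\<^sub>R a) \<le> dt * abar" using a dt by (simp add: mult_left_mono)
  finally have "norm v0 / ?c \<le> (norm (v0 + dt *\<^sub>R a) + dt * abar) / ?c"
    using c by (simp add: divide_right_mono)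
  also have "\<dots> = norm (v0 + dt *\<^sub>R a) / ?c + 1" using c using dt ab by (simp add: add_divide_distrib mult.commute)
  finally have l2: "real Nt - 2 < norm (v0 + dt *\<^sub>R a) / ?c" using lo by simp
  have u2: "norm (v0 + dt *\<^sub>R a) / ?c \<le> real (Nt - 1)"
    using vb c by (simp add: divide_le_eq mult.commute mult.left_commute)
  have "\<lceil>norm (v0 + dt *\<^sub>R a) / ?c\<rceil> = int (Nt - 1)"
    using l2 u2 Nt1 by (simp add: ceiling_eq_iff of_nat_diff)
  then show ?thesis by (simp add: nsteps_def)
qed

lemma agent_step:
  assumes dt: "dt > 0" and ab: "abar > 0" and N1: "N \<ge> 1"
    and NtN: "nat \<lceil>vbar / (abar * dt)\<rceil> \<le> N - 1"
    and Ntb: "nsteps abar dt (snd (st m)) \<le> nat \<lceil>vbar / (abar * dt)\<rceil>"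
    and g2: "g \<le> 2"
    and ok: "cmc_stage_ok dt abar vbar rho M N S st m sol g"
    and con: "ftocp_constr dt abar rho M N S st m (stage_Nh (nsteps abar dt (snd (st m))) g)
                (stage_vb abar dt (nsteps abar dt (snd (st m))) g) (sol g)"
    and s': "s' = step dt (st m) (sol g ! 0)"
    and Nh: "Nh = stage_Nh (nsteps abar dt (snd (st m))) g"
  shows "nsteps abar dt (snd s') \<le> nat \<lceil>vbar / (abar * dt)\<rceil> \<and>
     (\<forall>i. ref_pos abar dt s' i = fst (cont_state dt Nh s' (min (i+1) N))) \<and>
     (\<forall>i. fst (ref_state abar dt s' i) \<in> S m) \<and>
     (\<forall>j\<in>{1..M}. j \<noteq> m \<longrightarrow> (\<forall>i\<in>{1..N}.
            ref_pos abar dt (st j) i \<noteq> ref_pos abar dt (st m) i \<and>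
            ca_ok rho (ref_pos abar dt (st j) i) (ref_pos abar dt (st m) i)
                  (fst (cont_state dt Nh s' i))))"
proof -
  let ?Nt = "nsteps abar dt (snd (st m))"
  let ?Ntil = "nat \<lceil>vbar / (abar * dt)\<rceil>"
  have s1: "nom_state dt (st m) (sol g) 1 = s'" using s' by (simp add: nom1)
  from con have C: "length (sol g) = N" "\<forall>i<N. norm (sol g ! i) \<le> abar"
     "\<forall>i\<in>{1..N}. fst (nom_state dt (st m) (sol g) i) \<in> S m"
     "\<forall>i\<in>{2..Nh+1}. fst (cont_state dt Nh s' i) \<in> S m"
     "\<forall>j\<in>{1..M}. j \<noteq> m \<longrightarrow> (\<forall>i\<in>{1..N}.
            ref_pos abar dt (st j) i \<noteq> ref_pos abar dt (st m) i \<and>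
            ca_ok rho (ref_pos abar dt (st j) i) (ref_pos abar dt (st m) i)
                  (fst (cont_state dt Nh s' i)))"
     "case stage_vb abar dt ?Nt g of None \<Rightarrow> True | Some b \<Rightarrow> norm (snd s') \<le> b"
    unfolding ftocp_constr_def Let_def s1 Nh by auto
  have a0: "norm (sol g ! 0) \<le> abar" using C(2) N1 by simp
  have ns: "nsteps abar dt (snd s') = Nh \<and> Nh \<le> ?Ntil"
  proof -
    have "g = 0 \<or> g = 1 \<or> g = 2" using g2 by auto
    then show ?thesis
    proof (elim disjE)
      assume g: "g = 0"
      then have "?Nt < ?Ntil" "valid_sol dt abar (st m) (?Nt + 1) (sol 0)"
        using ok by (simp_all add: cmc_stage_ok_def Let_def stage_Nh_def)
      then have "\<lceil>norm (snd s') / (abar*dt)\<rceil> = int (?Nt+1)" using s1 g by (simp add: valid_sol_def)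
      then have "nsteps abar dt (snd s') = ?Nt + 1" by (simp only: nsteps_def nat_int)
      then show ?thesis using g Nh \<open>?Nt < ?Ntil\<close> by (simp add: stage_Nh_def)
    next
      assume g: "g = 1"
      then have "valid_sol dt abar (st m) ?Nt (sol 1)"
        using ok by (simp_all add: cmc_stage_ok_def Let_def stage_Nh_def)
      then have "\<lceil>norm (snd s') / (abar*dt)\<rceil> = int ?Nt" using s1 g by (simp add: valid_sol_def)
      then have "nsteps abar dt (snd s') = ?Nt" by (simp only: nsteps_def nat_int)
      then show ?thesis using g Nh Ntb by (simp add: stage_Nh_def)
    next
      assume g: "g = 2"
      then have "1 \<le> ?Nt" using ok by (simp add: cmc_stage_ok_def Let_def)
      moreover have "norm (snd (st m) + dt *\<^sub>R (sol g ! 0)) \<le> abar * real (?Nt - 1) * dt"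
        using C(6) g s' by (simp add: stage_vb_def snd_step)
      ultimately have "nsteps abar dt (snd (st m) + dt *\<^sub>R (sol g ! 0)) = ?Nt - 1"
        using stage_c_nsteps[OF dt ab refl _ a0] by blast
      then show ?thesis using g s' Nh Ntb by (simp add: snd_step stage_Nh_def)
    qed
  qed
  have NhN: "Nh \<le> N - 1" using ns NtN by (meson order_trans)
  have R: "ref_state abar dt s' i = (brk dt Nh (snd s') ^^ min i Nh) s'" for i
    using ref_iter[OF dt ab, of s' i] ns by simp
  have P2: "\<forall>i. ref_pos abar dt s' i = fst (cont_state dt Nh s' (min (i+1) N))"
  proof
    fix i
    have "min (min (i+1) N - 1) Nh = min i Nh" using NhN N1 by (simp add: min_def) arith
    then show "ref_pos abar dt s' i = fst (cont_state dt Nh s' (min (i+1) N))"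
      by (simp add: ref_pos_def R cont_iter)
  qed
  have P3: "\<forall>i. fst (ref_state abar dt s' i) \<in> S m"
  proof
    fix i
    show "fst (ref_state abar dt s' i) \<in> S m"
    proof (cases "min i Nh = 0")
      case True
      then show ?thesis using R[of i] C(3) N1 s1 by force
    next
      case False
      then have "min i Nh + 1 \<in> {2..Nh+1}" by auto
      then have "fst (cont_state dt Nh s' (min i Nh + 1)) \<in> S m" using C(4) by blast
      moreover have "cont_state dt Nh s' (min i Nh + 1) = ref_state abar dt s' i"
        by (simp add: R cont_iter)
      ultimately show ?thesis by simp
    qed
  qed
  show ?thesis using ns P2 P3 C(5) by simp
qed


lemma sep:
  fixes P Q x y :: vec
  assumes "P \<noteq> Q" "ca_ok rho P Q x" "ca_ok rho Q P y"
  shows "norm (x - y) \<ge> 2 * rho"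
proof -
  let ?u = "P - Q" let ?d = "norm (P - Q)"
  have d: "?d > 0" using assms(1) by simp
  have dq: "norm (Q - P) = ?d" by (rule norm_minus_commute)
  have h1: "(?u \<bullet> x) / ?d \<le> (?u \<bullet> Q) / ?d + ?d / 2 - rho"
    using assms(2) by (simp add: ca_ok_def Let_def)
  have h2: "((Q - P) \<bullet> y) / ?d \<le> ((Q - P) \<bullet> P) / ?d + ?d / 2 - rho"
    using assms(3) dq by (simp add: ca_ok_def Let_def)
  have "(Q - P) \<bullet> y = - (?u \<bullet> y)" "(Q - P) \<bullet> P = - (?u \<bullet> P)"
    by (simp_all add: inner_diff_left)
  with h2 have h2': "- (?u \<bullet> y) / ?d \<le> - (?u \<bullet> P) / ?d + ?d / 2 - rho" by simp
  have uu: "?u \<bullet> P - ?u \<bullet> Q = ?d * ?d"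
    by (simp add: inner_diff_right[symmetric] power2_eq_square[symmetric] power2_norm_eq_inner)
  have "(?u \<bullet> x - ?u \<bullet> y) / ?d \<le> (?u \<bullet> Q - ?u \<bullet> P) / ?d + ?d - 2 * rho"
    using h1 h2' by (simp add: diff_divide_distrib)
  also have "(?u \<bullet> Q - ?u \<bullet> P) / ?d = - ?d" using uu d by (simp add: field_simps)
  finally have "(?u \<bullet> (y - x)) / ?d \<ge> 2 * rho" by (simp add: inner_diff_right diff_divide_distrib)
  moreover have "?u \<bullet> (y - x) \<le> ?d * norm (y - x)" by (rule norm_cauchy_schwarz[THEN order_trans]) (simp add: norm_mult_ineq)
  then have "(?u \<bullet> (y - x)) / ?d \<le> norm (y - x)" using d by (simp add: divide_le_eq mult.commute)
  ultimately have "2 * rho \<le> norm (y - x)" by linarith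
  then show ?thesis by (simp add: norm_minus_commute)
qed

lemma ca_self:
  fixes P Q :: vec
  assumes "norm (P - Q) \<ge> 2 * rho"
  shows "ca_ok rho P Q Q"
  using assms by (simp add: ca_ok_def Let_def)

lemma cont_ref:
  assumes dt: "dt > 0" and ab: "abar > 0" and i: "i \<ge> 1"
  shows "cont_state dt (nsteps abar dt (snd s) - 1) (ref_state abar dt s 1) i = ref_state abar dt s i"
proof -
  let ?n = "nsteps abar dt (snd s)"
  let ?G = "brk dt ?n (snd s)"
  have R: "ref_state abar dt s j = (?G ^^ min j ?n) s" for j using ref_iter[OF dt ab] .
  show ?thesis
  proof (cases "?n = 0")
    case True
    then show ?thesis by (simp del: ref_state.simps add: R cont_iter)
  next
    case False
    have r1: "ref_state abar dt s 1 = ?G s" using False by (simp del: ref_state.simps add: R min_def)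
    have v1: "snd (?G s) = (1 - 1 / real ?n) *\<^sub>R snd s"
      using iter_vel[OF dt, of ?n 1 s] False by simp
    show ?thesis
    proof (cases "?n = 1")
      case True
      then show ?thesis using r1 i by (simp add: R cont_iter min_def)
    next
      case False2: False
      then have n2: "?n \<ge> 2" using False by simp
      have eq: "(1 / (real (?n - 1) * dt)) *\<^sub>R ((1 - 1 / real ?n) *\<^sub>R snd s)
            = (1 / (real ?n * dt)) *\<^sub>R snd s"
      proof -
        have "(1 / (real (?n - 1) * dt)) * (1 - 1 / real ?n) = 1 / (real ?n * dt)"
          using n2 dt by (simp add: of_nat_diff field_simps)
        then show ?thesis by simp
      qed
      have H0: "brk dt (?n - 1) ((1 - 1 / real ?n) *\<^sub>R snd s) x = brk dt ?n (snd s) x" for x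
        unfolding brk_def eq ..
      have H: "brk dt (?n - 1) (snd (?G s)) = ?G"
        by (rule ext) (simp only: v1 H0)
      have "cont_state dt (?n - 1) (ref_state abar dt s 1) i = (?G ^^ min (i - 1) (?n - 1)) (?G s)"
        by (simp only: r1 cont_iter H)
      also have "\<dots> = (?G ^^ Suc (min (i - 1) (?n - 1))) s"
        by (simp only: funpow_Suc_right comp_def)
      also have "Suc (min (i - 1) (?n - 1)) = min i ?n" using i n2 by simp
      finally show ?thesis by (simp add: R)
    qed
  qed
qed

lemma nom_ref:
  assumes "i \<le> N"
  shows "nom_state dt s (map (ref_input abar dt s) [0..<N]) i = ref_state abar dt s i"
  using assms by (induction i) auto

lemma candidate:
  assumes dt: "dt > 0" and ab: "abar > 0" and N1: "N \<ge> 1"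
    and sepa: "\<forall>j\<in>{1..M}. j \<noteq> m \<longrightarrow> (\<forall>i\<in>{1..N}.
          norm (ref_pos abar dt (st j) i - ref_pos abar dt (st m) i) \<ge> 2 * rho)"
    and rho: "rho > 0"
    and SS: "\<forall>i. fst (ref_state abar dt (st m) i) \<in> S m"
  shows "ftocp_feasible dt abar rho M N S st m (nsteps abar dt (snd (st m)) - 1)
           (Some (abar * real (nsteps abar dt (snd (st m)) - 1) * dt))"
proof -
  let ?s = "st m"
  let ?n = "nsteps abar dt (snd ?s)"
  let ?as = "map (ref_input abar dt ?s) [0..<N]"
  let ?r = "ref_state abar dt ?s"
  have nom: "\<And>i. i \<le> N \<Longrightarrow> nom_state dt ?s ?as i = ?r i" by (rule nom_ref)
  have n1: "nom_state dt ?s ?as 1 = ?r 1" using nom N1 by simp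
  have cont: "\<And>i. i \<ge> 1 \<Longrightarrow> cont_state dt (?n - 1) (?r 1) i = ?r i"
    by (rule cont_ref[OF dt ab])
  have inp: "norm (ref_input abar dt ?s i) \<le> abar" for i
  proof (cases "i < ?n")
    case True
    have ge: "norm (snd ?s) \<le> abar * dt * real ?n" by (rule nsteps_ge[OF dt ab])
    have "norm (ref_input abar dt ?s i) = norm (snd ?s) / (real ?n * dt)"
      using True dt by (simp add: ref_input_def Let_def)
    also have "\<dots> \<le> abar" using ge True dt by (simp add: divide_le_eq mult.commute mult.left_commute)
    finally show ?thesis .
  next
    case False then show ?thesis using ab by (simp add: ref_input_def Let_def)
  qed
  have vb: "norm (snd (?r 1)) \<le> abar * real (?n - 1) * dt"
  proof (cases "?n = 0")
    case True
    then have "snd ?s = 0" using nsteps_zero[OF dt ab] by simp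
    then show ?thesis using True by (simp del: ref_state.simps add: ref_iter[OF dt ab])
  next
    case False
    have r1: "?r 1 = (brk dt ?n (snd ?s)) ?s" using False by (simp del: ref_state.simps add: ref_iter[OF dt ab] min_def)
    have v1: "snd (?r 1) = (1 - 1 / real ?n) *\<^sub>R snd ?s"
      using iter_vel[OF dt, of ?n 1 ?s] False r1 by simp
    have ge: "norm (snd ?s) \<le> abar * dt * real ?n" by (rule nsteps_ge[OF dt ab])
    have c: "0 \<le> 1 - 1 / real ?n" using False by simp
    have "norm (snd (?r 1)) = (1 - 1 / real ?n) * norm (snd ?s)" using v1 c by simp
    also have "\<dots> \<le> (1 - 1 / real ?n) * (abar * dt * real ?n)" using ge c by (rule mult_left_mono)
    also have "\<dots> = abar * real (?n - 1) * dt" using False by (simp add: of_nat_diff field_simps)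
    finally show ?thesis .
  qed
  have "ftocp_constr dt abar rho M N S st m (?n - 1) (Some (abar * real (?n - 1) * dt)) ?as"
    unfolding ftocp_constr_def Let_def n1
  proof (intro conjI ballI allI impI)
    show "length ?as = N" by simp
  next
    fix i assume "i < N" then show "norm (?as ! i) \<le> abar" using inp by simp
  next
    fix i assume "i \<in> {1..N}" then show "fst (nom_state dt ?s ?as i) \<in> S m" using nom SS by simp
  next
    fix i assume "i \<in> {2..?n - 1 + 1}" then show "fst (cont_state dt (?n - 1) (?r 1) i) \<in> S m"
      using cont SS by simp
  next
    fix j i assume j: "j \<in> {1..M}" "j \<noteq> m" and i: "i \<in> {1..N}"
    then have d: "norm (ref_pos abar dt (st j) i - ref_pos abar dt (st m) i) \<ge> 2 * rho" using sepa by blast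
    then show "ref_pos abar dt (st j) i \<noteq> ref_pos abar dt (st m) i" using rho by auto
    have "fst (cont_state dt (?n - 1) (?r 1) i) = ref_pos abar dt (st m) i"
      using cont i by (simp add: ref_pos_def)
    then show "ca_ok rho (ref_pos abar dt (st j) i) (ref_pos abar dt (st m) i)
          (fst (cont_state dt (?n - 1) (?r 1) i))" using ca_self[OF d] by simp
  next
    show "case Some (abar * real (?n - 1) * dt) of None \<Rightarrow> True | Some b \<Rightarrow> norm (snd (?r 1)) \<le> b"
      using vb by simp
  qed
  then show ?thesis unfolding ftocp_feasible_def by blast
qed

lemma constr_vb:
  "ftocp_constr dt abar rho M N S st m Nh (Some b) as \<Longrightarrow> norm (snd (nom_state dt (st m) as 1)) \<le> b"
  unfolding ftocp_constr_def Let_def by simp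

theorem theorem1:
  fixes dt abar vbar rho :: real
    and M N :: nat
    and S :: "nat \<Rightarrow> vec set"
    and J :: "nat \<Rightarrow> vec list \<Rightarrow> state list \<Rightarrow> real"
    and s :: "nat \<Rightarrow> nat \<Rightarrow> state"
    and sel :: "nat \<Rightarrow> nat \<Rightarrow> nat \<Rightarrow> vec list"
  assumes "dt > 0" and "abar > 0" and "vbar > 0" and "rho > 0"
    and "M \<ge> 2" and "N \<ge> 1"
    and "nat \<lceil>vbar / (abar * dt)\<rceil> \<le> N - 1"
    and "\<forall>m\<in>{1..M}. norm (snd (s 0 m)) \<le> vbar"
    and solver: "\<forall>m\<in>{1..M}. \<forall>k g. g \<le> 2 \<longrightarrow>
          (let Nt = nsteps abar dt (snd (s k m)) in
           ftocp_feasible dt abar rho M N S (s k) m (stage_Nh Nt g) (stage_vb abar dt Nt g)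
           \<longrightarrow> ftocp_optimal dt abar rho M N S J (s k) m (stage_Nh Nt g) (stage_vb abar dt Nt g)
                 (sel m k g))"
    and closed_loop: "\<forall>k. \<forall>m\<in>{1..M}. cmc_succeeds dt abar vbar rho M N S (s k) m (sel m k) \<longrightarrow>
          s (Suc k) m = step dt (s k m) (cmc_input dt abar vbar rho M N S (s k) m (sel m k))"
    and init: "\<forall>m\<in>{1..M}. cmc_succeeds dt abar vbar rho M N S (s 0) m (sel m 0)"
  shows "\<forall>k. \<forall>m\<in>{1..M}. cmc_succeeds dt abar vbar rho M N S (s k) m (sel m k)"
proof -
  note dt = assms(1) and ab = assms(2) and rho = assms(4) and N1 = assms(6) and NtN = assms(7)
  define Ntil where "Ntil = nat \<lceil>vbar / (abar * dt)\<rceil>"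
  have I: "\<forall>m\<in>{1..M}. cmc_succeeds dt abar vbar rho M N S (s k) m (sel m k)
               \<and> nsteps abar dt (snd (s k m)) \<le> Ntil" for k
  proof (induction k)
    case 0
    show ?case
    proof
      fix m assume m: "m \<in> {1..M}"
      have "norm (snd (s 0 m)) \<le> vbar" using assms(8) m by blast
      then have "norm (snd (s 0 m)) / (abar * dt) \<le> vbar / (abar * dt)"
        using dt ab by (simp add: divide_right_mono)
      then have "nsteps abar dt (snd (s 0 m)) \<le> Ntil"
        unfolding nsteps_def Ntil_def by (intro nat_mono ceiling_mono)
      then show "cmc_succeeds dt abar vbar rho M N S (s 0) m (sel m 0)
               \<and> nsteps abar dt (snd (s 0 m)) \<le> Ntil" using init m by blast
    qed
  next
    case (Suc k)
    have ST: "\<forall>m\<in>{1..M}. \<exists>Nh. nsteps abar dt (snd (s (Suc k) m)) \<le> Ntil \<and>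
       (\<forall>i. ref_pos abar dt (s (Suc k) m) i = fst (cont_state dt Nh (s (Suc k) m) (min (i+1) N))) \<and>
       (\<forall>i. fst (ref_state abar dt (s (Suc k) m) i) \<in> S m) \<and>
       (\<forall>j\<in>{1..M}. j \<noteq> m \<longrightarrow> (\<forall>i\<in>{1..N}.
            ref_pos abar dt (s k j) i \<noteq> ref_pos abar dt (s k m) i \<and>
            ca_ok rho (ref_pos abar dt (s k j) i) (ref_pos abar dt (s k m) i)
                  (fst (cont_state dt Nh (s (Suc k) m) i))))"
    proof
      fix m assume m: "m \<in> {1..M}"
      let ?ok = "cmc_stage_ok dt abar vbar rho M N S (s k) m (sel m k)"
      define G where "G = (if ?ok 0 then 0 else if ?ok 1 then 1 else (2::nat))"
      have succ: "cmc_succeeds dt abar vbar rho M N S (s k) m (sel m k)"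
        and Ntb: "nsteps abar dt (snd (s k m)) \<le> Ntil" using Suc m by auto
      have G2: "G \<le> 2" by (simp add: G_def)
      have okG: "?ok G"
      proof -
        obtain g where g: "g \<le> 2" "?ok g" using succ unfolding cmc_succeeds_def by blast
        show ?thesis
        proof (cases "?ok 0")
          case True then show ?thesis by (simp add: G_def)
        next
          case F0: False
          show ?thesis
          proof (cases "?ok 1")
            case True then show ?thesis using F0 by (simp add: G_def)
          next
            case F1: False
            have "g \<noteq> 0" using F0 g(2) by metis
            moreover have "g \<noteq> 1" using F1 g(2) by metis
            ultimately have "g = 2" using g(1) by linarith
            then show ?thesis using F0 F1 g(2) by (simp add: G_def)
          qed
        qed
      qed
      have inp: "cmc_input dt abar vbar rho M N S (s k) m (sel m k) = sel m k G ! 0"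
        unfolding cmc_input_def G_def by simp
      have sk: "s (Suc k) m = step dt (s k m) (sel m k G ! 0)"
        using closed_loop[rule_format, OF m succ] inp by simp
      let ?Nt = "nsteps abar dt (snd (s k m))"
      have feas: "ftocp_feasible dt abar rho M N S (s k) m (stage_Nh ?Nt G) (stage_vb abar dt ?Nt G)"
      proof -
        have "G = 0 \<or> G = 1 \<or> G = 2" using G2 by auto
        then show ?thesis using okG unfolding cmc_stage_ok_def Let_def by (elim disjE) simp_all
      qed
      have "ftocp_optimal dt abar rho M N S J (s k) m (stage_Nh ?Nt G) (stage_vb abar dt ?Nt G) (sel m k G)"
        by (rule solver[unfolded Let_def, rule_format, OF m G2 feas])
      then have con: "ftocp_constr dt abar rho M N S (s k) m (stage_Nh ?Nt G) (stage_vb abar dt ?Nt G) (sel m k G)"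
        unfolding ftocp_optimal_def by (rule conjunct1)
      show "\<exists>Nh. nsteps abar dt (snd (s (Suc k) m)) \<le> Ntil \<and>
       (\<forall>i. ref_pos abar dt (s (Suc k) m) i = fst (cont_state dt Nh (s (Suc k) m) (min (i+1) N))) \<and>
       (\<forall>i. fst (ref_state abar dt (s (Suc k) m) i) \<in> S m) \<and>
       (\<forall>j\<in>{1..M}. j \<noteq> m \<longrightarrow> (\<forall>i\<in>{1..N}.
            ref_pos abar dt (s k j) i \<noteq> ref_pos abar dt (s k m) i \<and>
            ca_ok rho (ref_pos abar dt (s k j) i) (ref_pos abar dt (s k m) i)
                  (fst (cont_state dt Nh (s (Suc k) m) i))))"
        unfolding Ntil_def
        by (rule exI, rule agent_step[OF dt ab N1 NtN Ntb[unfolded Ntil_def] G2 okG con sk refl])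
    qed
    then obtain NH where NH: "\<forall>m\<in>{1..M}. nsteps abar dt (snd (s (Suc k) m)) \<le> Ntil \<and>
       (\<forall>i. ref_pos abar dt (s (Suc k) m) i = fst (cont_state dt (NH m) (s (Suc k) m) (min (i+1) N))) \<and>
       (\<forall>i. fst (ref_state abar dt (s (Suc k) m) i) \<in> S m) \<and>
       (\<forall>j\<in>{1..M}. j \<noteq> m \<longrightarrow> (\<forall>i\<in>{1..N}.
            ref_pos abar dt (s k j) i \<noteq> ref_pos abar dt (s k m) i \<and>
            ca_ok rho (ref_pos abar dt (s k j) i) (ref_pos abar dt (s k m) i)
                  (fst (cont_state dt (NH m) (s (Suc k) m) i))))"
      using bchoice[OF ST] by (elim exE) assumption
    show ?case
    proof
      fix m assume m: "m \<in> {1..M}"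
      have sepa: "\<forall>j\<in>{1..M}. j \<noteq> m \<longrightarrow> (\<forall>i\<in>{1..N}.
          norm (ref_pos abar dt (s (Suc k) j) i - ref_pos abar dt (s (Suc k) m) i) \<ge> 2 * rho)"
      proof (intro ballI impI)
        fix j i assume j: "j \<in> {1..M}" "j \<noteq> m" and i: "i \<in> {1..N}"
        define i' where "i' = min (i+1) N"
        have i': "i' \<in> {1..N}" using i N1 by (auto simp: i'_def)
        have A: "ref_pos abar dt (s k j) i' \<noteq> ref_pos abar dt (s k m) i' \<and>
            ca_ok rho (ref_pos abar dt (s k j) i') (ref_pos abar dt (s k m) i')
                  (fst (cont_state dt (NH m) (s (Suc k) m) i'))"
          using conjunct2[OF conjunct2[OF conjunct2[OF bspec[OF NH m]]], rule_format, OF j i'] .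
        have mj: "m \<noteq> j" using j(2) by simp
        have B: "ca_ok rho (ref_pos abar dt (s k m) i') (ref_pos abar dt (s k j) i')
                  (fst (cont_state dt (NH j) (s (Suc k) j) i'))"
          by (rule conjunct2[OF conjunct2[OF conjunct2[OF conjunct2[OF bspec[OF NH j(1)]]], rule_format, OF m mj i']])
        have "norm (fst (cont_state dt (NH m) (s (Suc k) m) i') - fst (cont_state dt (NH j) (s (Suc k) j) i')) \<ge> 2 * rho"
          by (rule sep[OF conjunct1[OF A] conjunct2[OF A] B])
        moreover have "ref_pos abar dt (s (Suc k) m) i = fst (cont_state dt (NH m) (s (Suc k) m) i')"
          "ref_pos abar dt (s (Suc k) j) i = fst (cont_state dt (NH j) (s (Suc k) j) i')"
          unfolding i'_def by (rule spec[OF conjunct1[OF conjunct2[OF bspec[OF NH m]]]], rule spec[OF conjunct1[OF conjunct2[OF bspec[OF NH j(1)]]]])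
        ultimately show "norm (ref_pos abar dt (s (Suc k) j) i - ref_pos abar dt (s (Suc k) m) i) \<ge> 2 * rho"
          by (simp add: norm_minus_commute)
      qed
      have SS: "\<forall>i. fst (ref_state abar dt (s (Suc k) m) i) \<in> S m" by (rule conjunct1[OF conjunct2[OF conjunct2[OF bspec[OF NH m]]]])
      have nb: "nsteps abar dt (snd (s (Suc k) m)) \<le> Ntil" by (rule conjunct1[OF bspec[OF NH m]])
      let ?n = "nsteps abar dt (snd (s (Suc k) m))"
      have F: "ftocp_feasible dt abar rho M N S (s (Suc k)) m (?n - 1) (Some (abar * real (?n - 1) * dt))"
        by (rule candidate[where st="s (Suc k)" and S=S and m=m and M=M, OF dt ab N1 sepa rho SS])
      have "cmc_succeeds dt abar vbar rho M N S (s (Suc k)) m (sel m (Suc k))"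
      proof (cases "?n = 0")
        case False
        then have "cmc_stage_ok dt abar vbar rho M N S (s (Suc k)) m (sel m (Suc k)) 2"
          using F by (simp add: cmc_stage_ok_def Let_def stage_Nh_def stage_vb_def)
        then show ?thesis unfolding cmc_succeeds_def by (intro exI[where x=2] conjI) simp_all
      next
        case True
        have F1: "ftocp_feasible dt abar rho M N S (s (Suc k)) m (stage_Nh ?n 1) (stage_vb abar dt ?n 1)"
          using F True by (simp add: stage_Nh_def stage_vb_def)
        have "ftocp_optimal dt abar rho M N S J (s (Suc k)) m (stage_Nh ?n 1) (stage_vb abar dt ?n 1) (sel m (Suc k) 1)"
          by (rule solver[unfolded Let_def, rule_format, OF m _ F1]) simp
        then have con1: "ftocp_constr dt abar rho M N S (s (Suc k)) m (stage_Nh ?n 1) (stage_vb abar dt ?n 1) (sel m (Suc k) 1)"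
          unfolding ftocp_optimal_def by (rule conjunct1)
        have "stage_vb abar dt ?n 1 = Some 0" using True by (simp add: stage_vb_def)
        then have "norm (snd (nom_state dt (s (Suc k) m) (sel m (Suc k) 1) 1)) \<le> 0"
          using con1 constr_vb by metis
        then have "valid_sol dt abar (s (Suc k) m) (stage_Nh ?n 1) (sel m (Suc k) 1)"
          using True by (simp add: valid_sol_def stage_Nh_def)
        then have "cmc_stage_ok dt abar vbar rho M N S (s (Suc k)) m (sel m (Suc k)) 1"
          using F1 by (simp add: cmc_stage_ok_def Let_def)
        then show ?thesis unfolding cmc_succeeds_def by (intro exI[where x=1] conjI) simp_all
      qed
      then show "cmc_succeeds dt abar vbar rho M N S (s (Suc k)) m (sel m (Suc k))
               \<and> nsteps abar dt (snd (s (Suc k) m)) \<le> Ntil" using nb by blast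
    qed
  qed
  show ?thesis using I by blast
qed

end
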